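(* Let $x_1\in\mathbb{R}$, $x_2\in\mathbb{R}\cup\{+\infty\}$ with $x_1<x_2$, let $D=[x_1,x_2)$, and let $f:D\to\mathbb{R}$ be ordinal decreasing with $f(x)>0$ for all $x\in D$. Define points $p_\alpha$ for ordinals $\alpha$ by $p_0=x_1$, $p_{\alpha+1}=\max\{y\le x_2:\ x-f(x)<p_\alpha\text{ for all }x\in D\text{ with }x<y\}$, and $p_\alpha=\sup_{\beta<\alpha}p_\beta$ for limit $\alpha$, and define intervals $I_\alpha=[p_\alpha,p_{\alpha+1})$. These intervals partition $D$, and the ordinal number of (nonempty) intervals $I_\alpha$ in this partition is at most $\omega\cdot(o(f|_D)+1)$.
   Context: For $h:E\to\mathbb{R}$, a strictly decreasing sequence $x_1>x_2>\cdots$ in $E$ is $h$-bad if $h(x_1)>h(x_2)>\cdots$; $h$ is ordinal decreasing if there is no infinite $h$-bad sequence. For ordinal decreasing $h$, the tree $T_h$ has a vertex for each finite $h$-bad sequence (the empty sequence being the root), the parent of $\langle x_1>\cdots>x_n\rangle$ being $\langle x_1>\cdots>x_{n-1}\rangle$; each vertex gets the ordinal height $o(v)=\sup_{w\text{ child of }v}(o(w)+1)$, and $o(h)$ is the height of the root. $o(f|_D)$ is the ordinal type of the restriction of $f$ to $D$. Maxima/suprema are taken in $\mathbb{R}\cup\{+\infty\}$. *)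

theory Defs
  imports "HOL-Analysis.Analysis"
begin

definition bad_list :: "(real \<Rightarrow> real) \<Rightarrow> real set \<Rightarrow> real list \<Rightarrow> bool" where
  "bad_list h E xs \<longleftrightarrow> set xs \<subseteq> E \<and> sorted_wrt (\<lambda>a b. a > b) xs
      \<and> sorted_wrt (\<lambda>a b. h a > h b) xs"

definition ordinal_decreasing :: "(real \<Rightarrow> real) \<Rightarrow> real set \<Rightarrow> bool" where
  "ordinal_decreasing h E \<longleftrightarrow>
     \<not> (\<exists>s::nat \<Rightarrow> real. \<forall>n. s n \<in> E \<and> s (Suc n) < s n \<and> h (s (Suc n)) < h (s n))"

text \<open>Comparison of ordinal heights of vertices of T_h (vertices = finite bad lists,
  children of u are the bad lists u @ [x]).  Since
  o(v) = sup_{w child of v} (o(w)+1), one has o(u) \<le> o(v) iff every child u' of u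
  has o(u') < o(v), i.e. iff every child u' of u has o(u') \<le> o(v') for some child v'
  of v.  For ordinal decreasing h (T_h well-founded) the least relation closed under
  this rule is exactly the relation o(u) \<le> o(v).\<close>
inductive ht_le :: "(real \<Rightarrow> real) \<Rightarrow> real set \<Rightarrow> real list \<Rightarrow> real list \<Rightarrow> bool"
  for h E where
  "bad_list h E u \<Longrightarrow> bad_list h E v \<Longrightarrow>
   (\<forall>x. bad_list h E (u @ [x]) \<longrightarrow>
        (\<exists>y. bad_list h E (v @ [y]) \<and> ht_le h E (u @ [x]) (v @ [y])))
   \<Longrightarrow> ht_le h E u v"

text \<open>o(u) < o(v) iff o(u) \<le> o(w) for some child w of v.\<close>
definition ht_less :: "(real \<Rightarrow> real) \<Rightarrow> real set \<Rightarrow> real list \<Rightarrow> real list \<Rightarrow> bool" where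
  "ht_less h E u v \<longleftrightarrow> (\<exists>y. bad_list h E (v @ [y]) \<and> ht_le h E u (v @ [y]))"

text \<open>The class of vertices with the same height as v (represents the ordinal o(v)).\<close>
definition rank_class :: "(real \<Rightarrow> real) \<Rightarrow> real set \<Rightarrow> real list \<Rightarrow> real list set" where
  "rank_class h E v = {u. bad_list h E u \<and> ht_le h E u v \<and> ht_le h E v u}"

text \<open>The ordinal o(h) (height of the root []), as a well-order: the ordinals o(v) < o([])
  (every ordinal below the height of the root is the height of some vertex), ordered
  by size.\<close>
definition ord_height :: "(real \<Rightarrow> real) \<Rightarrow> real set \<Rightarrow> real list set rel" where
  "ord_height h E = {(rank_class h E u, rank_class h E v) | u v.
      bad_list h E u \<and> bad_list h E v \<and> ht_less h E u [] \<and> ht_less h E v []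
      \<and> ht_le h E u v}"

text \<open>Successor ordinal r + 1: add a new top element.\<close>
definition ord_succ :: "'a rel \<Rightarrow> 'a option rel" where
  "ord_succ r = {(Some a, Some b) | a b. (a, b) \<in> r}
      \<union> {(a, None) | a. a = None \<or> (\<exists>b \<in> Field r. a = Some b)}"

text \<open>The ordinal product omega * r: r copies of omega, ordered lexicographically
  with the r-coordinate most significant.\<close>
definition omega_times :: "'a rel \<Rightarrow> ('a \<times> nat) rel" where
  "omega_times r = {((a, m), (b, n)) | a b m n. a \<in> Field r \<and> b \<in> Field r \<and>
      (((a, b) \<in> r \<and> a \<noteq> b) \<or> (a = b \<and> m \<le> n))}"

definition next_pt :: "(real \<Rightarrow> real) \<Rightarrow> real set \<Rightarrow> ereal \<Rightarrow> ereal \<Rightarrow> ereal" where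
  "next_pt f D x2 p = (GREATEST y. y \<le> x2 \<and>
      (\<forall>x\<in>D. ereal x < y \<longrightarrow> ereal (x - f x) < p))"

text \<open>The set of all points p_alpha (alpha ranging over all ordinals): the transfinite
  iteration of next_pt starting at x1, taking suprema at limit stages.  Since the
  p_alpha form a nondecreasing transfinite sequence, this is exactly the least set
  containing x1 and closed under next_pt and under suprema of nonempty subsets.\<close>
inductive_set pts :: "(real \<Rightarrow> real) \<Rightarrow> real set \<Rightarrow> real \<Rightarrow> ereal \<Rightarrow> ereal set"
  for f D x1 x2 where
  base: "ereal x1 \<in> pts f D x1 x2"
| succ: "p \<in> pts f D x1 x2 \<Longrightarrow> next_pt f D x2 p \<in> pts f D x1 x2"
| lim: "(\<forall>a\<in>A. a \<in> pts f D x1 x2) \<Longrightarrow> A \<noteq> {} \<Longrightarrow> Sup A \<in> pts f D x1 x2"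

definition interval_at :: "(real \<Rightarrow> real) \<Rightarrow> real set \<Rightarrow> ereal \<Rightarrow> ereal \<Rightarrow> real set" where
  "interval_at f D x2 p = {x. p \<le> ereal x \<and> ereal x < next_pt f D x2 p}"

end

theory Submission
  imports Defs
begin


lemma WO_least: "Well_order r \<Longrightarrow> A \<subseteq> Field r \<Longrightarrow> A \<noteq> {} \<Longrightarrow> \<exists>a\<in>A. \<forall>a'\<in>A. (a, a') \<in> r"
  using Linear_order_Well_order_iff[of r] unfolding well_order_on_def by blast

lemma WO_po: "Well_order r \<Longrightarrow> partial_order_on (Field r) r"
  unfolding well_order_on_def linear_order_on_def by blast

lemma WO_refl: "Well_order r \<Longrightarrow> a \<in> Field r \<Longrightarrow> (a, a) \<in> r"
  unfolding order_on_defs refl_on_def by blast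

lemma WO_trans: "Well_order r \<Longrightarrow> (a, b) \<in> r \<Longrightarrow> (b, c) \<in> r \<Longrightarrow> (a, c) \<in> r"
  using WO_po partial_order_onD(2) transD by metis

lemma WO_antisym: "Well_order r \<Longrightarrow> (a, b) \<in> r \<Longrightarrow> (b, a) \<in> r \<Longrightarrow> a = b"
  using WO_po partial_order_onD(3) antisymD by metis

lemma WO_total: "Well_order r \<Longrightarrow> a \<in> Field r \<Longrightarrow> b \<in> Field r \<Longrightarrow> (a, b) \<in> r \<or> (b, a) \<in> r"
proof -
  assume wo: "Well_order r" and ab: "a \<in> Field r" "b \<in> Field r"
  have "total_on (Field r) r" using wo by (simp add: well_order_on_def linear_order_on_def)
  then show ?thesis using ab WO_refl[OF wo ab(1)] unfolding total_on_def by metis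
qed


lemma WO_intro:
  assumes "\<And>a. a \<in> Field r \<Longrightarrow> (a, a) \<in> r"
    and "\<And>a b c. (a, b) \<in> r \<Longrightarrow> (b, c) \<in> r \<Longrightarrow> (a, c) \<in> r"
    and "\<And>a b. (a, b) \<in> r \<Longrightarrow> (b, a) \<in> r \<Longrightarrow> a = b"
    and "\<And>a b. a \<in> Field r \<Longrightarrow> b \<in> Field r \<Longrightarrow> (a, b) \<in> r \<or> (b, a) \<in> r"
    and "\<And>A. A \<subseteq> Field r \<Longrightarrow> A \<noteq> {} \<Longrightarrow> \<exists>a\<in>A. \<forall>a'\<in>A. (a, a') \<in> r"
  shows "Well_order r"
proof -
  have "r \<subseteq> Field r \<times> Field r" by (auto simp: Field_def)
  moreover have "refl_on (Field r) r" using assms(1) unfolding refl_on_def by blast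
  moreover have "trans r" using assms(2) unfolding trans_def by blast
  moreover have "antisym r" using assms(3) unfolding antisym_def by blast
  moreover have "total_on (Field r) r" using assms(4) unfolding total_on_def by blast
  ultimately have "Linear_order r"
    unfolding linear_order_on_def partial_order_on_def preorder_on_def by blast
  then show ?thesis using Linear_order_Well_order_iff assms(5) by blast
qed

lemma Field_mem: "x \<in> Field R \<longleftrightarrow> (\<exists>y. (x, y) \<in> R \<or> (y, x) \<in> R)"
  by (auto simp: Field_def)

lemma ord_succ_iff: "(x, y) \<in> ord_succ r \<longleftrightarrow> (\<exists>a b. x = Some a \<and> y = Some b \<and> (a, b) \<in> r)
   \<or> (y = None \<and> (x = None \<or> (\<exists>b\<in>Field r. x = Some b)))"
  by (auto simp: ord_succ_def)

lemma Field_ord_succ: "Field (ord_succ r) = Some ` Field r \<union> {None}"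
proof (rule set_eqI)
  fix x
  show "x \<in> Field (ord_succ r) \<longleftrightarrow> x \<in> Some ` Field r \<union> {None}"
  proof
    assume "x \<in> Field (ord_succ r)"
    then obtain y where "(x, y) \<in> ord_succ r \<or> (y, x) \<in> ord_succ r" using Field_mem by metis
    then show "x \<in> Some ` Field r \<union> {None}" unfolding ord_succ_iff by (auto intro: FieldI1 FieldI2)
  next
    assume "x \<in> Some ` Field r \<union> {None}"
    then have "(x, None) \<in> ord_succ r" unfolding ord_succ_iff by auto
    then show "x \<in> Field (ord_succ r)" by (rule FieldI1)
  qed
qed

lemma omega_times_iff: "((a, m), (b, n)) \<in> omega_times r \<longleftrightarrow>
   a \<in> Field r \<and> b \<in> Field r \<and> ((a, b) \<in> r \<and> a \<noteq> b \<or> a = b \<and> m \<le> n)"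
  by (auto simp: omega_times_def)

lemma Field_omega_times: "Field (omega_times r) = {(a, m). a \<in> Field r}"
proof (rule set_eqI)
  fix x :: "'a \<times> nat"
  obtain a m where x: "x = (a, m)" by force
  show "x \<in> Field (omega_times r) \<longleftrightarrow> x \<in> {(a, m). a \<in> Field r}"
  proof
    assume "x \<in> Field (omega_times r)"
    then obtain y where "(x, y) \<in> omega_times r \<or> (y, x) \<in> omega_times r" using Field_mem by metis
    then show "x \<in> {(a, m). a \<in> Field r}" using x by (cases y) (auto simp: omega_times_iff)
  next
    assume "x \<in> {(a, m). a \<in> Field r}"
    then have "(x, x) \<in> omega_times r" using x by (auto simp: omega_times_iff)
    then show "x \<in> Field (omega_times r)" by (rule FieldI1)
  qed
qed

lemma WO_ord_succ:
  assumes wo: "Well_order r"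
  shows "Well_order (ord_succ r)"
proof (rule WO_intro)
  fix a assume "a \<in> Field (ord_succ r)"
  then show "(a, a) \<in> ord_succ r"
    unfolding Field_ord_succ ord_succ_iff using WO_refl[OF wo] by blast
next
  fix a b c assume ab: "(a, b) \<in> ord_succ r" and bc: "(b, c) \<in> ord_succ r"
  show "(a, c) \<in> ord_succ r"
  proof (cases c)
    case None
    have "a = None \<or> (\<exists>x\<in>Field r. a = Some x)"
      using ab unfolding ord_succ_iff by (blast intro: FieldI1)
    then show ?thesis using None unfolding ord_succ_iff by blast
  next
    case (Some z)
    then obtain y where y: "b = Some y" "(y, z) \<in> r" using bc unfolding ord_succ_iff by blast
    then obtain x where x: "a = Some x" "(x, y) \<in> r" using ab unfolding ord_succ_iff by blast
    show ?thesis using x y Some WO_trans[OF wo x(2) y(2)] unfolding ord_succ_iff by blast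
  qed
next
  fix a b assume ab: "(a, b) \<in> ord_succ r" and ba: "(b, a) \<in> ord_succ r"
  show "a = b"
  proof (cases a)
    case None
    then show ?thesis using ab unfolding ord_succ_iff by blast
  next
    case (Some x)
    show ?thesis
    proof (cases b)
      case None
      then show ?thesis using ba Some unfolding ord_succ_iff by blast
    next
      case (Some y)
      then show ?thesis using ab ba \<open>a = Some x\<close> WO_antisym[OF wo] unfolding ord_succ_iff by blast
    qed
  qed
next
  fix a b assume a: "a \<in> Field (ord_succ r)" and b: "b \<in> Field (ord_succ r)"
  show "(a, b) \<in> ord_succ r \<or> (b, a) \<in> ord_succ r"
  proof (cases "a = None \<or> b = None")
    case True
    then show ?thesis using a b unfolding Field_ord_succ ord_succ_iff by blast
  next
    case False
    then obtain x y where "a = Some x" "b = Some y" "x \<in> Field r" "y \<in> Field r"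
      using a b unfolding Field_ord_succ by blast
    then show ?thesis using WO_total[OF wo] unfolding ord_succ_iff by blast
  qed
next
  fix A assume A: "A \<subseteq> Field (ord_succ r)" "A \<noteq> {}"
  show "\<exists>a\<in>A. \<forall>a'\<in>A. (a, a') \<in> ord_succ r"
  proof (cases "\<exists>b. Some b \<in> A")
    case True
    have sub: "{b. Some b \<in> A} \<subseteq> Field r" using A unfolding Field_ord_succ by blast
    then obtain b where b: "b \<in> {b. Some b \<in> A}" "\<forall>b'\<in>{b. Some b \<in> A}. (b, b') \<in> r"
      using WO_least[OF wo sub] True by blast
    have bF: "b \<in> Field r" using b sub by blast
    have "(Some b, a') \<in> ord_succ r" if "a' \<in> A" for a'
    proof (cases a')
      case None then show ?thesis using bF unfolding ord_succ_iff by blast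
    next
      case (Some y) then show ?thesis using b that unfolding ord_succ_iff by blast
    qed
    then show ?thesis using b by blast
  next
    case False
    then have "A = {None}" using A by (metis not_None_eq subset_singletonD subsetI singletonI equals0I)
    then show ?thesis unfolding ord_succ_iff by blast
  qed
qed

lemma WO_omega_times:
  assumes wo: "Well_order r"
  shows "Well_order (omega_times r)"
proof (rule WO_intro)
  fix x assume "x \<in> Field (omega_times r)"
  then show "(x, x) \<in> omega_times r" unfolding Field_omega_times
    by (cases x) (simp add: omega_times_iff)
next
  fix x y z assume xy: "(x, y) \<in> omega_times r" and yz: "(y, z) \<in> omega_times r"
  obtain a m b n c k where e: "x = (a, m)" "y = (b, n)" "z = (c, k)" by (metis prod.exhaust)
  have 1: "a \<in> Field r" "b \<in> Field r" "(a, b) \<in> r \<and> a \<noteq> b \<or> a = b \<and> m \<le> n"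
    using xy e by (simp_all add: omega_times_iff)
  have 2: "c \<in> Field r" "(b, c) \<in> r \<and> b \<noteq> c \<or> b = c \<and> n \<le> k"
    using yz e by (simp_all add: omega_times_iff)
  have "(a, c) \<in> r \<and> a \<noteq> c \<or> a = c \<and> m \<le> k"
  proof (cases "a = b")
    case True then show ?thesis using 1 2 by auto
  next
    case False
    then have ab: "(a, b) \<in> r" using 1 by blast
    show ?thesis
    proof (cases "b = c")
      case True then show ?thesis using ab False by blast
    next
      case False
      then have bc: "(b, c) \<in> r" using 2 by blast
      have "a \<noteq> c" using ab bc WO_antisym[OF wo] \<open>a \<noteq> b\<close> by blast
      then show ?thesis using WO_trans[OF wo ab bc] by blast
    qed
  qed
  then show "(x, z) \<in> omega_times r" using e 1 2 by (simp add: omega_times_iff)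
next
  fix x y assume xy: "(x, y) \<in> omega_times r" and yx: "(y, x) \<in> omega_times r"
  obtain a m b n where e: "x = (a, m)" "y = (b, n)" by (metis prod.exhaust)
  show "x = y" using xy yx e WO_antisym[OF wo] by (auto simp: omega_times_iff)
next
  fix x y assume x: "x \<in> Field (omega_times r)" and y: "y \<in> Field (omega_times r)"
  obtain a m b n where e: "x = (a, m)" "y = (b, n)" by (metis prod.exhaust)
  have "a \<in> Field r" "b \<in> Field r" using x y e unfolding Field_omega_times by auto
  then show "(x, y) \<in> omega_times r \<or> (y, x) \<in> omega_times r"
    using e WO_total[OF wo, of a b] by (auto simp: omega_times_iff)
next
  fix A assume A: "A \<subseteq> Field (omega_times r)" "A \<noteq> {}"
  have "fst ` A \<subseteq> Field r" "fst ` A \<noteq> {}" using A unfolding Field_omega_times by auto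
  then obtain a where a: "a \<in> fst ` A" "\<forall>a'\<in>fst ` A. (a, a') \<in> r"
    using WO_least[OF wo] by blast
  obtain m where m: "(a, m) \<in> A" using a by force
  define m0 where "m0 = (LEAST m. (a, m) \<in> A)"
  have m0: "(a, m0) \<in> A" "\<And>k. (a, k) \<in> A \<Longrightarrow> m0 \<le> k"
    unfolding m0_def using m by (auto intro: LeastI Least_le)
  have aF: "a \<in> Field r" using a A unfolding Field_omega_times by auto
  have "\<forall>x\<in>A. ((a, m0), x) \<in> omega_times r"
  proof
    fix x assume x: "x \<in> A"
    obtain b n where bn: "x = (b, n)" by force
    have "(a, b) \<in> r" "b \<in> Field r" using a x bn A unfolding Field_omega_times by force+
    then show "((a, m0), x) \<in> omega_times r"
      using m0(2)[of n] x bn aF by (auto simp: omega_times_iff)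
  qed
  then show "\<exists>a\<in>A. \<forall>a'\<in>A. (a, a') \<in> omega_times r" using m0 by blast
qed

lemma strict_mono_self:
  assumes wo: "Well_order r" and mF: "\<And>a. a \<in> Field r \<Longrightarrow> m a \<in> Field r"
    and mono: "\<And>a b. (a, b) \<in> r \<Longrightarrow> a \<noteq> b \<Longrightarrow> (m a, m b) \<in> r \<and> m a \<noteq> m b"
  shows "a \<in> Field r \<Longrightarrow> (a, m a) \<in> r"
proof -
  have wf: "wf (r - Id)" using wo unfolding well_order_on_def by blast
  show "a \<in> Field r \<Longrightarrow> (a, m a) \<in> r"
  proof (induction a rule: wf_induct_rule[OF wf])
    case (1 a)
    show ?case
    proof (rule ccontr)
      assume n: "(a, m a) \<notin> r"
      have maF: "m a \<in> Field r" using mF 1(2) .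
      have "(m a, a) \<in> r" using WO_total[OF wo maF 1(2)] n by blast
      moreover have "m a \<noteq> a" using n WO_refl[OF wo 1(2)] by metis
      ultimately have "(m a, a) \<in> r - Id" by blast
      then have "(m a, m (m a)) \<in> r" using 1(1) maF by blast
      moreover have "(m (m a), m a) \<in> r" "m (m a) \<noteq> m a"
        using mono[OF \<open>(m a, a) \<in> r\<close> \<open>m a \<noteq> a\<close>] by blast+
      ultimately show False using WO_antisym[OF wo] by blast
    qed
  qed
qed

lemma mono_ordLeq:
  assumes wo: "Well_order r" and wo': "Well_order r'"
    and gF: "\<And>a. a \<in> Field r \<Longrightarrow> g a \<in> Field r'"
    and mono: "\<And>a b. (a, b) \<in> r \<Longrightarrow> a \<noteq> b \<Longrightarrow> (g a, g b) \<in> r' \<and> g a \<noteq> g b"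
  shows "(r, r') \<in> ordLeq"
proof (rule ccontr)
  assume "(r, r') \<notin> ordLeq"
  then have "(r', r) \<in> ordLess" using not_ordLeq_iff_ordLess[OF wo' wo] by blast
  then obtain a where a: "a \<in> Field r" "(r', Restr r (underS r a)) \<in> ordIso"
    using ordLess_iff_ordIso_Restr[OF wo wo'] by blast
  then obtain k where k: "iso r' (Restr r (underS r a)) k" unfolding ordIso_def by blast
  then have kb: "bij_betw k (Field r') (Field (Restr r (underS r a)))"
    and kc: "\<And>x y. x \<in> Field r' \<Longrightarrow> y \<in> Field r' \<Longrightarrow> (x, y) \<in> r' \<longleftrightarrow> (k x, k y) \<in> Restr r (underS r a)"
    unfolding iso_iff2 by blast+
  have kF: "k x \<in> Field (Restr r (underS r a))" if "x \<in> Field r'" for x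
    using kb that unfolding bij_betw_def by blast
  have kinj: "k x \<noteq> k y" if "x \<in> Field r'" "y \<in> Field r'" "x \<noteq> y" for x y
    using kb that unfolding bij_betw_def inj_on_def by blast
  define m where "m = k \<circ> g"
  have mF: "m x \<in> Field (Restr r (underS r a))" if "x \<in> Field r" for x
    using kF gF that unfolding m_def by simp
  have FR: "Field (Restr r (underS r a)) \<subseteq> Field r \<inter> underS r a"
    using Field_Restr_subset[of r "underS r a"] mono_Field[of "Restr r (underS r a)" r] by blast
  have mF2: "m x \<in> Field r" "m x \<in> underS r a" if "x \<in> Field r" for x
    using mF[OF that] FR by blast+
  have mono2: "(m x, m y) \<in> r \<and> m x \<noteq> m y" if xy: "(x, y) \<in> r" "x \<noteq> y" for x y
  proof -
    have xyF: "x \<in> Field r" "y \<in> Field r" using xy by (blast intro: FieldI1 FieldI2)+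
    have g: "(g x, g y) \<in> r'" "g x \<noteq> g y" using mono xy by blast+
    have "(k (g x), k (g y)) \<in> Restr r (underS r a)" using kc[OF gF gF] xyF g(1) by blast
    moreover have "k (g x) \<noteq> k (g y)" using kinj[OF gF gF] xyF g(2) by blast
    ultimately show ?thesis unfolding m_def by simp
  qed
  have "(a, m a) \<in> r" using strict_mono_self[OF wo, of m a] mF2 mono2 a(1) by blast
  moreover have "(m a, a) \<in> r" "m a \<noteq> a" using mF2(2)[OF a(1)] unfolding underS_def by auto
  ultimately show False using WO_antisym[OF wo] by blast
qed




definition childR :: "(real \<Rightarrow> real) \<Rightarrow> real set \<Rightarrow> (real list \<times> real list) set" where
  "childR h E = {(u @ [x], u) | u x. bad_list h E (u @ [x])}"

lemma bl_snoc_iff: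
  "bad_list h E (u @ [x]) \<longleftrightarrow> bad_list h E u \<and> x \<in> E \<and> (\<forall>a\<in>set u. x < a \<and> h x < h a)"
  unfolding bad_list_def by (auto simp: sorted_wrt_append)

lemma bl_prefix: "bad_list h E (u @ [x]) \<Longrightarrow> bad_list h E u"
  by (simp add: bl_snoc_iff)

lemma bl_last_le: "bad_list h E L \<Longrightarrow> a \<in> set L \<Longrightarrow> last L \<le> a \<and> h (last L) \<le> h a"
proof (induction L)
  case Nil then show ?case by simp
next
  case (Cons b L)
  have bl: "bad_list h E L" using Cons.prems unfolding bad_list_def by auto
  show ?case
  proof (cases "L = []")
    case True then show ?thesis using Cons.prems by simp
  next
    case False
    have "last L \<in> set L" using False by simp
    then have "last L < b \<and> h (last L) < h b" using Cons.prems unfolding bad_list_def by auto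
    then show ?thesis using Cons False bl by auto
  qed
qed

lemma bl_snoc_iff2:
  assumes "w \<noteq> []"
  shows "bad_list h E (u @ w @ [z]) \<longleftrightarrow> bad_list h E (u @ w) \<and> z \<in> E \<and> z < last w \<and> h z < h (last w)"
proof
  assume a: "bad_list h E (u @ w @ [z])"
  have "last w \<in> set (u @ w)" using assms by simp
  then show "bad_list h E (u @ w) \<and> z \<in> E \<and> z < last w \<and> h z < h (last w)"
    using a bl_snoc_iff[of h E "u @ w" z] by auto
next
  assume a: "bad_list h E (u @ w) \<and> z \<in> E \<and> z < last w \<and> h z < h (last w)"
  have "last (u @ w) = last w" using assms by simp
  then have "\<forall>b\<in>set (u @ w). z < b \<and> h z < h b"
    using a bl_last_le[of h E "u @ w"] by fastforce
  then show "bad_list h E (u @ w @ [z])" using a bl_snoc_iff[of h E "u @ w" z] by auto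
qed

lemma childR_wf:
  assumes "ordinal_decreasing h E"
  shows "wf (childR h E)"
proof (rule ccontr)
  assume "\<not> wf (childR h E)"
  then obtain g where g: "\<And>i. (g (Suc i), g i) \<in> childR h E"
    unfolding wf_iff_no_infinite_down_chain by blast
  have "\<exists>y. g (Suc i) = g i @ [y] \<and> bad_list h E (g i @ [y])" for i
    using g[of i] unfolding childR_def by auto
  then obtain y where y: "\<And>i. g (Suc i) = g i @ [y i] \<and> bad_list h E (g i @ [y i])" by metis
  have "y i \<in> E \<and> y (Suc i) < y i \<and> h (y (Suc i)) < h (y i)" for i
  proof -
    have "bad_list h E ((g i @ [y i]) @ [y (Suc i)])" using y[of "Suc i"] y[of i] by simp
    then have "y i \<in> E \<and> (\<forall>a\<in>set (g i @ [y i]). y (Suc i) < a \<and> h (y (Suc i)) < h a)"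
      using y[of i] bl_snoc_iff[of h E "g i" "y i"] bl_snoc_iff[of h E "g i @ [y i]" "y (Suc i)"] by blast
    then show ?thesis by simp
  qed
  then show False using assms unfolding ordinal_decreasing_def by blast
qed

locale tree =
  fixes h :: "real \<Rightarrow> real" and E :: "real set"
  assumes wfc: "wf (childR h E)"
begin

abbreviation "bl \<equiv> bad_list h E"
abbreviation "hle \<equiv> ht_le h E"

lemma child_in: "bl (u @ [x]) \<Longrightarrow> (u @ [x], u) \<in> childR h E"
  unfolding childR_def by auto

lemma hle_iff: "hle u v \<longleftrightarrow> bl u \<and> bl v \<and> (\<forall>x. bl (u @ [x]) \<longrightarrow> (\<exists>y. bl (v @ [y]) \<and> hle (u @ [x]) (v @ [y])))"
  by (subst ht_le.simps) auto

lemma hle_bl: "hle u v \<Longrightarrow> bl u \<and> bl v"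
  using hle_iff by blast

lemma hle_refl: "bl u \<Longrightarrow> hle u u"
proof (induction u rule: wf_induct_rule[OF wfc])
  case (1 u)
  show ?case
    using 1 child_in by (subst hle_iff) blast
qed

lemma hle_trans: "hle u v \<Longrightarrow> hle v w \<Longrightarrow> hle u w"
proof (induction arbitrary: w rule: ht_le.induct)
  case (1 u v)
  have "\<forall>x. bl (u @ [x]) \<longrightarrow> (\<exists>z. bl (w @ [z]) \<and> hle (u @ [x]) (w @ [z]))"
  proof (intro allI impI)
    fix x assume "bl (u @ [x])"
    then obtain y where y: "bl (v @ [y])" "hle (u @ [x]) (v @ [y])"
      "\<And>w. hle (v @ [y]) w \<Longrightarrow> hle (u @ [x]) w" using 1 by blast
    obtain z where "bl (w @ [z])" "hle (v @ [y]) (w @ [z])" using y(1) 1(4) hle_iff by blast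
    then show "\<exists>z. bl (w @ [z]) \<and> hle (u @ [x]) (w @ [z])" using y(3) by blast
  qed
  then show ?case using 1 hle_bl by (subst hle_iff) blast
qed

lemma hle_total: "bl u \<Longrightarrow> bl v \<Longrightarrow> hle u v \<or> hle v u"
proof (induction u arbitrary: v rule: wf_induct_rule[OF wfc])
  case (1 u)
  show ?case
  proof (rule ccontr)
    assume n: "\<not> (hle u v \<or> hle v u)"
    then obtain x where x: "bl (u @ [x])" "\<forall>y. bl (v @ [y]) \<longrightarrow> \<not> hle (u @ [x]) (v @ [y])"
      using 1 by (subst (asm) hle_iff) blast
    have "\<forall>y. bl (v @ [y]) \<longrightarrow> hle (v @ [y]) (u @ [x])"
      using x 1(1)[OF child_in[OF x(1)]] by blast
    then have "hle v u" using 1 x(1) by (subst hle_iff) blast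
    then show False using n by blast
  qed
qed

lemma hle_child: "bl (u @ [x]) \<Longrightarrow> hle (u @ [x]) u"
proof (induction "u @ [x]" arbitrary: u x rule: wf_induct_rule[OF wfc])
  case (1 u x)
  show ?case
    using 1 child_in bl_prefix by (subst hle_iff) blast
qed

lemma not_hle_child: "bl u \<Longrightarrow> bl (u @ [x]) \<Longrightarrow> \<not> hle u (u @ [x])"
proof (induction u arbitrary: x rule: wf_induct_rule[OF wfc])
  case (1 u x)
  show ?case
  proof
    assume "hle u (u @ [x])"
    then obtain y where "bl (u @ [x] @ [y])" "hle (u @ [x]) (u @ [x] @ [y])"
      using 1(3) by (subst (asm) hle_iff) auto
    then show False using 1(1)[OF child_in[OF 1(3)]] 1(3) by auto
  qed
qed

definition "hless u v \<longleftrightarrow> (\<exists>y. bl (v @ [y]) \<and> hle u (v @ [y]))"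

lemma hless_eq: "hless = ht_less h E"
  unfolding hless_def ht_less_def by (intro ext) simp

lemma hless_not_hle: "hless u v \<Longrightarrow> \<not> hle v u"
  unfolding hless_def using hle_trans not_hle_child hle_bl by blast

lemma not_hle_hless: "bl a \<Longrightarrow> bl b \<Longrightarrow> \<not> hle b a \<Longrightarrow> hless a b"
proof (induction a arbitrary: b rule: wf_induct_rule[OF wfc])
  case (1 a b)
  obtain y where y: "bl (b @ [y])" "\<forall>x. bl (a @ [x]) \<longrightarrow> \<not> hle (b @ [y]) (a @ [x])"
    using 1 by (subst (asm) hle_iff) blast
  have "\<forall>x. bl (a @ [x]) \<longrightarrow> hless (a @ [x]) (b @ [y])"
    using y 1(1) child_in by blast
  then have "hle a (b @ [y])" using 1 y unfolding hless_def by (subst hle_iff) blast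
  then show ?case using y unfolding hless_def by blast
qed

lemma hless_iff: "bl a \<Longrightarrow> bl b \<Longrightarrow> hless a b \<longleftrightarrow> \<not> hle b a"
  using hless_not_hle not_hle_hless by blast

lemma hless_bl: "hless a b \<Longrightarrow> bl a \<and> bl b"
  unfolding hless_def using hle_bl bl_prefix by blast

lemma hless_wf: "wfP hless"
proof -
  have acc: "hle u v \<Longrightarrow> Wellfounded.accp hless u" for u v
  proof (induction v arbitrary: u rule: wf_induct_rule[OF wfc])
    case (1 v u)
    show ?case
    proof (rule accp.intros)
      fix w assume "hless w u"
      then obtain x where x: "bl (u @ [x])" "hle w (u @ [x])" unfolding hless_def by blast
      then obtain y where y: "bl (v @ [y])" "hle (u @ [x]) (v @ [y])" using 1(2) hle_iff by blast
      then show "Wellfounded.accp hless w" using 1(1)[OF child_in[OF y(1)]] hle_trans x(2) by blast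
    qed
  qed
  have "Wellfounded.accp hless u" for u
  proof (rule accp.intros)
    fix w assume "hless w u"
    then show "Wellfounded.accp hless w" using acc hle_refl hless_bl by blast
  qed
  then show ?thesis by (simp add: wfp_iff_accp)
qed

lemma hless_minimal:
  assumes "x \<in> Q"
  shows "\<exists>z\<in>Q. \<forall>y\<in>Q. \<not> hless y z"
proof -
  have "wf {(x, y). hless x y}" using hless_wf unfolding wfp_def by simp
  then show ?thesis using assms unfolding wf_eq_minimal by blast
qed

lemma shift_hle:
  "w \<noteq> [] \<Longrightarrow> bl (u @ w) \<Longrightarrow> bl (v @ w) \<Longrightarrow> hle (u @ w) (v @ w)"
proof (induction "u @ w" arbitrary: u w rule: wf_induct_rule[OF wfc])
  case (1 u w)
  have "\<forall>z. bl ((u @ w) @ [z]) \<longrightarrow> (\<exists>y. bl ((v @ w) @ [y]) \<and> hle ((u @ w) @ [z]) ((v @ w) @ [y]))"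
  proof (intro allI impI)
    fix z assume z: "bl ((u @ w) @ [z])"
    then have z2: "bl ((v @ w) @ [z])"
      using 1(4) by (simp add: bl_snoc_iff2[OF 1(2)])
    have "hle (u @ (w @ [z])) (v @ (w @ [z]))"
      using 1(1)[of u "w @ [z]"] child_in[OF z] z z2 by simp
    then show "\<exists>y. bl ((v @ w) @ [y]) \<and> hle ((u @ w) @ [z]) ((v @ w) @ [y])" using z2 by auto
  qed
  then show ?case using 1 by (subst hle_iff) blast
qed

abbreviation "G \<equiv> {u. bl u \<and> hless u []}"
abbreviation "cls \<equiv> rank_class h E"
abbreviation "H \<equiv> ord_height h E"

lemma cls_mem: "w \<in> cls u \<longleftrightarrow> bl w \<and> hle w u \<and> hle u w"
  unfolding rank_class_def by simp

lemma cls_eq: "bl u \<Longrightarrow> bl v \<Longrightarrow> cls u = cls v \<longleftrightarrow> hle u v \<and> hle v u"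
proof
  assume "bl u" "bl v" "cls u = cls v"
  then have "u \<in> cls v" using cls_mem hle_refl by blast
  then show "hle u v \<and> hle v u" using cls_mem by blast
next
  assume "hle u v \<and> hle v u"
  then show "cls u = cls v" unfolding rank_class_def using hle_trans by blast
qed

lemma H_def2: "(X, Y) \<in> H \<longleftrightarrow> (\<exists>u v. X = cls u \<and> Y = cls v \<and> bl u \<and> bl v \<and> hless u [] \<and> hless v [] \<and> hle u v)"
  unfolding ord_height_def hless_eq by simp

lemma H_elem: "(X, Y) \<in> H \<Longrightarrow> \<exists>u\<in>G. \<exists>v\<in>G. X = cls u \<and> Y = cls v \<and> hle u v"
proof -
  assume "(X, Y) \<in> H"
  then obtain u v where uv: "X = cls u" "Y = cls v" "bl u" "bl v" "hless u []" "hless v []" "hle u v"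
    unfolding H_def2 by blast
  have "u \<in> G" "v \<in> G" using uv by simp_all
  then show ?thesis using uv by blast
qed

lemma H_iff: "u \<in> G \<Longrightarrow> v \<in> G \<Longrightarrow> (cls u, cls v) \<in> H \<longleftrightarrow> hle u v"
proof
  assume u: "u \<in> G" and v: "v \<in> G" and "(cls u, cls v) \<in> H"
  then obtain u0 v0 where uv0: "u0 \<in> G" "v0 \<in> G" "cls u = cls u0" "cls v = cls v0" "hle u0 v0"
    using H_elem by blast
  have "bl u" "bl v" "bl u0" "bl v0" using u v uv0 by simp_all
  then have "hle u u0" "hle v0 v" using cls_eq uv0 by blast+
  then show "hle u v" using hle_trans uv0(5) by blast
next
  assume a: "u \<in> G" "v \<in> G" "hle u v"
  have "bl u" "bl v" "hless u []" "hless v []" using a(1,2) by simp_all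
  then show "(cls u, cls v) \<in> H" unfolding H_def2 using a(3) by blast
qed

lemma Field_H: "Field H = cls ` G"
proof
  show "Field H \<subseteq> cls ` G"
  proof
    fix X assume "X \<in> Field H"
    then obtain Y where "(X, Y) \<in> H \<or> (Y, X) \<in> H" using Field_mem by metis
    then show "X \<in> cls ` G" using H_elem by blast
  qed
next
  show "cls ` G \<subseteq> Field H"
  proof
    fix X assume "X \<in> cls ` G"
    then obtain u where "u \<in> G" "X = cls u" by blast
    then have "(X, X) \<in> H" using H_iff hle_refl by blast
    then show "X \<in> Field H" by (rule FieldI1)
  qed
qed

lemma Field_H_iff: "X \<in> Field H \<longleftrightarrow> (\<exists>u. u \<in> G \<and> X = cls u)"
  unfolding Field_H by blast

lemma WO_H: "Well_order H"
proof (rule WO_intro)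
  fix X assume "X \<in> Field H"
  then obtain u where u: "u \<in> G" "X = cls u" unfolding Field_H_iff by blast
  have "bl u" using u(1) by simp
  then have "hle u u" by (rule hle_refl)
  then show "(X, X) \<in> H" using H_iff[OF u(1) u(1)] u(2) by simp
next
  fix X Y Z assume a: "(X, Y) \<in> H" "(Y, Z) \<in> H"
  obtain u v where uv: "u \<in> G" "v \<in> G" "X = cls u" "Y = cls v" "hle u v" using H_elem[OF a(1)] by blast
  obtain v' w where vw: "v' \<in> G" "w \<in> G" "Y = cls v'" "Z = cls w" "hle v' w" using H_elem[OF a(2)] by blast
  have "bl v" "bl v'" using uv vw by simp_all
  then have "hle v v'" using cls_eq uv(4) vw(3) by blast
  then have "hle u w" using hle_trans uv(5) vw(5) by blast
  then show "(X, Z) \<in> H" using H_iff[OF uv(1) vw(2)] uv(3) vw(4) by blast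
next
  fix X Y assume a: "(X, Y) \<in> H" "(Y, X) \<in> H"
  obtain u v where uv: "u \<in> G" "v \<in> G" "X = cls u" "Y = cls v" "hle u v" using H_elem[OF a(1)] by blast
  have "hle v u" using a(2) H_iff[OF uv(2) uv(1)] uv(3,4) by blast
  moreover have "bl u" "bl v" using uv by simp_all
  ultimately show "X = Y" using uv cls_eq by blast
next
  fix X Y assume "X \<in> Field H" "Y \<in> Field H"
  then obtain u v where uv: "u \<in> G" "v \<in> G" "X = cls u" "Y = cls v" unfolding Field_H_iff by blast
  have "bl u" "bl v" using uv by simp_all
  then have "hle u v \<or> hle v u" using hle_total by blast
  then show "(X, Y) \<in> H \<or> (Y, X) \<in> H" using H_iff[OF uv(1) uv(2)] H_iff[OF uv(2) uv(1)] uv(3,4) by blast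
next
  fix A assume A: "A \<subseteq> Field H" "A \<noteq> {}"
  define S where "S = {u \<in> G. cls u \<in> A}"
  obtain X0 where "X0 \<in> A" using A by blast
  then have "X0 \<in> Field H" using A by blast
  then obtain u0 where "u0 \<in> G" "X0 = cls u0" unfolding Field_H_iff by blast
  then have "u0 \<in> S" using \<open>X0 \<in> A\<close> unfolding S_def by blast
  then obtain u where u: "u \<in> S" "\<forall>y\<in>S. \<not> hless y u"
    using hless_minimal[of u0 S] by blast
  have uG: "u \<in> G" "cls u \<in> A" using u(1) unfolding S_def by blast+
  have "(cls u, X) \<in> H" if "X \<in> A" for X
  proof -
    have "X \<in> Field H" using that A by blast
    then obtain w where w: "w \<in> G" "X = cls w" unfolding Field_H_iff by blast
    then have "w \<in> S" using that unfolding S_def by blast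
    then have "\<not> hless w u" using u by blast
    moreover have "bl u" "bl w" using uG w by simp_all
    ultimately have "hle u w" using hless_iff by blast
    then show ?thesis using H_iff[OF uG(1) w(1)] w(2) by blast
  qed
  then show "\<exists>a\<in>A. \<forall>a'\<in>A. (a, a') \<in> H" using uG by blast
qed

end




locale pset =
  fixes x1 :: real and x2 :: ereal and f :: "real \<Rightarrow> real" and D :: "real set"
  assumes x12: "ereal x1 < x2"
    and Ddef: "D = {x. x1 \<le> x \<and> ereal x < x2}"
    and od: "ordinal_decreasing f D"
    and fpos: "\<forall>x\<in>D. f x > 0"
begin

abbreviation "T \<equiv> pts f D x1 x2"
abbreviation "nx \<equiv> next_pt f D x2"

lemma nx_char:
  "nx p \<le> x2 \<and> (\<forall>x\<in>D. ereal x < nx p \<longrightarrow> ereal (x - f x) < p)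
   \<and> (\<forall>y. y \<le> x2 \<and> (\<forall>x\<in>D. ereal x < y \<longrightarrow> ereal (x - f x) < p) \<longrightarrow> y \<le> nx p)"
proof -
  define P where "P y \<longleftrightarrow> y \<le> x2 \<and> (\<forall>x\<in>D. ereal x < y \<longrightarrow> ereal (x - f x) < p)" for y
  define s where "s = Sup {y. P y}"
  have Ps: "P s"
    unfolding P_def
  proof
    show "s \<le> x2" unfolding s_def P_def by (rule Sup_least) blast
    show "\<forall>x\<in>D. ereal x < s \<longrightarrow> ereal (x - f x) < p"
    proof (intro ballI impI)
      fix x assume x: "x \<in> D" "ereal x < s"
      then obtain y where "y \<in> {y. P y}" "ereal x < y" unfolding s_def less_Sup_iff by blast
      then show "ereal (x - f x) < p" using x unfolding P_def by blast
    qed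
  qed
  have ge: "P y \<Longrightarrow> y \<le> s" for y unfolding s_def by (rule Sup_upper) simp
  have "(GREATEST y. P y) = s" by (rule Greatest_equality) (use Ps ge in blast)+
  moreover have "nx p = (GREATEST y. P y)" unfolding next_pt_def P_def by simp
  ultimately have "nx p = s" by simp
  then show ?thesis using Ps ge unfolding P_def by blast
qed

lemma nx_le: "nx p \<le> x2" using nx_char by blast
lemma nx_below: "x \<in> D \<Longrightarrow> ereal x < nx p \<Longrightarrow> ereal (x - f x) < p" using nx_char by blast
lemma nx_ge: "y \<le> x2 \<Longrightarrow> (\<And>x. x \<in> D \<Longrightarrow> ereal x < y \<Longrightarrow> ereal (x - f x) < p) \<Longrightarrow> y \<le> nx p"
  using nx_char by blast

lemma nx_infl: "p \<le> x2 \<Longrightarrow> p \<le> nx p"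
proof (rule nx_ge)
  fix x assume "x \<in> D" "ereal x < p"
  then have "x - f x < x" using fpos by auto
  then have "ereal (x - f x) < ereal x" by simp
  then show "ereal (x - f x) < p" using \<open>ereal x < p\<close> by (rule less_trans)
qed

lemma T_bounds: "p \<in> T \<Longrightarrow> ereal x1 \<le> p \<and> p \<le> x2"
proof (induction rule: pts.induct)
  case base then show ?case using x12 by simp
next
  case (succ p) then show ?case using nx_infl[of p] nx_le[of p] by auto
next
  case (lim A)
  then obtain a where "a \<in> A" by blast
  then have "ereal x1 \<le> Sup A" using lim by (meson Sup_upper order_trans)
  moreover have "Sup A \<le> x2" using lim by (meson Sup_least)
  ultimately show ?case by blast
qed

lemma T_infl: "p \<in> T \<Longrightarrow> p \<le> nx p" using T_bounds nx_infl by blast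

lemma T_real: "p \<in> T \<Longrightarrow> p < x2 \<Longrightarrow> \<exists>r. p = ereal r \<and> x1 \<le> r"
proof -
  assume a: "p \<in> T" "p < x2"
  then have "ereal x1 \<le> p" using T_bounds by blast
  then show ?thesis using a(2) by (cases p) auto
qed

lemma near:
  assumes "nx (ereal r) \<le> ereal r" "ereal r < x2" "e > 0"
  shows "\<exists>x\<in>D. r < x \<and> f x \<le> x - r \<and> x < r + e"
proof -
  define y where "y = min (ereal (r + e)) x2"
  have "ereal r < y" unfolding y_def using assms by auto
  have "\<not> y \<le> nx (ereal r)" using assms(1) \<open>ereal r < y\<close> by auto
  moreover have "y \<le> x2" unfolding y_def by simp
  ultimately obtain x where x: "x \<in> D" "ereal x < y" "\<not> ereal (x - f x) < ereal r"
    using nx_ge[of y "ereal r"] by blast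
  have "f x > 0" using fpos x(1) by blast
  moreover have "r \<le> x - f x" using x(3) by simp
  moreover have "x < r + e" using x(2) unfolding y_def by simp
  ultimately show ?thesis using x(1) by (intro bexI[of _ x]) auto
qed

lemma T_strict:
  assumes "p \<in> T" "p < x2"
  shows "p < nx p"
proof (rule ccontr)
  assume "\<not> p < nx p"
  obtain r where r: "p = ereal r" using T_real assms by blast
  have le: "nx (ereal r) \<le> ereal r" using \<open>\<not> p < nx p\<close> r by simp
  have lt: "ereal r < x2" using assms r by simp
  define Q where "Q a x \<longleftrightarrow> x \<in> D \<and> r < x \<and> f x \<le> x - r \<and> x < r + min (a - r) (f a)" for a x
  have Qex: "\<exists>x. Q a x" if "a \<in> D" "r < a" for a
  proof -
    have "min (a - r) (f a) > 0" using that fpos by auto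
    then show ?thesis using near[OF le lt] unfolding Q_def by blast
  qed
  obtain x0 where x0: "x0 \<in> D" "r < x0" "f x0 \<le> x0 - r" using near[OF le lt, of 1] by auto
  define s where "s = rec_nat x0 (\<lambda>_ a. SOME x. Q a x)"
  have s0: "s 0 = x0" and sS: "s (Suc n) = (SOME x. Q (s n) x)" for n unfolding s_def by simp_all
  have inv: "s n \<in> D \<and> r < s n \<and> f (s n) \<le> s n - r" for n
  proof (induction n)
    case 0 then show ?case using s0 x0 by simp
  next
    case (Suc n)
    have "Q (s n) (s (Suc n))" unfolding sS using Qex Suc by (metis someI_ex)
    then show ?case unfolding Q_def by blast
  qed
  have "s (Suc n) < s n \<and> f (s (Suc n)) < f (s n)" for n
  proof -
    have "Q (s n) (s (Suc n))" unfolding sS using Qex inv by (metis someI_ex)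
    then show ?thesis unfolding Q_def by auto
  qed
  then show False using od inv unfolding ordinal_decreasing_def by blast
qed

lemma tower_E1:
  assumes c: "c \<in> T" and ext: "\<forall>x\<in>T. x < c \<longrightarrow> nx x \<le> c"
  shows "x \<in> T \<Longrightarrow> x \<le> c \<or> nx c \<le> x"
proof (induction rule: pts.induct)
  case base then show ?case using T_bounds[OF c] by simp
next
  case (succ x)
  show ?case
  proof (cases "x < c")
    case True then show ?thesis using ext succ by blast
  next
    case False
    then have "x = c \<or> nx c \<le> x" using succ by auto
    then show ?thesis using T_infl[OF succ(1)] by auto
  qed
next
  case (lim A)
  show ?case
  proof (cases "\<forall>a\<in>A. a \<le> c")
    case True then show ?thesis by (simp add: Sup_least)
  next
    case False
    then obtain a where "a \<in> A" "nx c \<le> a" using lim by auto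
    then show ?thesis by (meson Sup_upper order_trans)
  qed
qed

lemma tower: "c \<in> T \<Longrightarrow> \<forall>x\<in>T. x < c \<longrightarrow> nx x \<le> c"
proof (induction rule: pts.induct)
  case base
  show ?case
  proof (intro ballI impI)
    fix x assume "x \<in> T" "x < ereal x1"
    then show "nx x \<le> ereal x1" using T_bounds[of x] by (meson leD)
  qed
next
  case (succ c)
  show ?case
  proof (intro ballI impI)
    fix x assume x: "x \<in> T" "x < nx c"
    then have "x \<le> c" using tower_E1[OF succ(1) succ(2) x(1)] by auto
    then show "nx x \<le> nx c"
    proof (cases "x < c")
      case True then show ?thesis using succ x T_infl[OF succ(1)] by auto
    next
      case False then show ?thesis using \<open>x \<le> c\<close> by auto
    qed
  qed
next
  case (lim A)
  show ?case
  proof (intro ballI impI)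
    fix x assume x: "x \<in> T" "x < Sup A"
    then obtain a where "a \<in> A" "x < a" unfolding less_Sup_iff by blast
    then have "nx x \<le> a" using lim x by blast
    then show "nx x \<le> Sup A" using \<open>a \<in> A\<close> by (meson Sup_upper order_trans)
  qed
qed

lemma T_Sup: "A \<subseteq> T \<Longrightarrow> A \<noteq> {} \<Longrightarrow> Sup A \<in> T"
  by (rule pts.lim) auto

lemma T_least:
  assumes "S \<subseteq> T" "S \<noteq> {}"
  shows "\<exists>m\<in>S. \<forall>s\<in>S. m \<le> s"
proof -
  define L where "L = {x \<in> T. \<forall>s\<in>S. x \<le> s}"
  have "\<forall>s\<in>S. ereal x1 \<le> s" using assms(1) T_bounds by (meson subsetD)
  then have "ereal x1 \<in> L" unfolding L_def using pts.base by simp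
  moreover have "L \<subseteq> T" unfolding L_def by (rule subsetI) simp
  ultimately have mT: "Sup L \<in> T" using T_Sup[of L] by (metis empty_iff)
  have mle: "\<forall>s\<in>S. Sup L \<le> s" unfolding L_def by (auto intro: Sup_least)
  show ?thesis
  proof (cases "Sup L \<in> S")
    case True then show ?thesis using mle by blast
  next
    case False
    then have lt: "\<forall>s\<in>S. Sup L < s" using mle by (metis order.not_eq_order_implies_strict)
    have "\<forall>s\<in>S. nx (Sup L) \<le> s"
    proof
      fix s assume "s \<in> S"
      then have "s \<in> T" "Sup L < s" using assms(1) lt by auto
      then show "nx (Sup L) \<le> s" using tower[OF \<open>s \<in> T\<close>] mT by blast
    qed
    then have "nx (Sup L) \<in> L" using pts.succ[OF mT] unfolding L_def by simp
    then have "nx (Sup L) \<le> Sup L" by (rule Sup_upper)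
    moreover obtain s where "s \<in> S" using assms by blast
    then have "Sup L < s" "s \<le> x2" using lt T_bounds assms(1) by (meson subsetD)+
    then have "Sup L < x2" by (rule less_le_trans)
    then have "Sup L < nx (Sup L)" using T_strict mT by blast
    ultimately show ?thesis by simp
  qed
qed

end



context pset begin

lemma union: "(\<Union>p\<in>T. interval_at f D x2 p) = D"
proof
  show "(\<Union>p\<in>T. interval_at f D x2 p) \<subseteq> D"
  proof
    fix x assume "x \<in> (\<Union>p\<in>T. interval_at f D x2 p)"
    then obtain p where p: "p \<in> T" "p \<le> ereal x" "ereal x < nx p" unfolding interval_at_def by blast
    have "ereal x1 \<le> ereal x" using T_bounds[OF p(1)] p(2) by (rule order_trans[OF conjunct1])
    moreover have "ereal x < x2" using p(3) nx_le[of p] by (rule less_le_trans)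
    ultimately show "x \<in> D" unfolding Ddef by simp
  qed
next
  show "D \<subseteq> (\<Union>p\<in>T. interval_at f D x2 p)"
  proof
    fix x assume x: "x \<in> D"
    define L where "L = {q \<in> T. q \<le> ereal x}"
    have "ereal x1 \<in> L" unfolding L_def using x pts.base unfolding Ddef by simp
    moreover have "L \<subseteq> T" unfolding L_def by (rule subsetI) simp
    ultimately have mT: "Sup L \<in> T" using T_Sup[of L] by (metis empty_iff)
    have mle: "Sup L \<le> ereal x" unfolding L_def by (rule Sup_least) simp
    have "ereal x < nx (Sup L)"
    proof (rule ccontr)
      assume "\<not> ereal x < nx (Sup L)"
      then have "nx (Sup L) \<le> ereal x" by simp
      then have "nx (Sup L) \<in> L" using pts.succ[OF mT] unfolding L_def by simp
      then have "nx (Sup L) \<le> Sup L" by (rule Sup_upper)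
      moreover have "ereal x < x2" using x unfolding Ddef by simp
      then have "Sup L < x2" using mle by (meson le_less_trans)
      then have "Sup L < nx (Sup L)" using T_strict mT by blast
      ultimately show False by simp
    qed
    then have "x \<in> interval_at f D x2 (Sup L)" unfolding interval_at_def using mle by simp
    then show "x \<in> (\<Union>p\<in>T. interval_at f D x2 p)" using mT by blast
  qed
qed

lemma disjoint:
  assumes "p \<in> T" "q \<in> T" "interval_at f D x2 p \<inter> interval_at f D x2 q \<noteq> {}"
  shows "p = q"
proof -
  obtain x where x: "p \<le> ereal x" "ereal x < nx p" "q \<le> ereal x" "ereal x < nx q"
    using assms(3) unfolding interval_at_def by blast
  have "\<not> p < q"
  proof
    assume "p < q"
    then have "nx p \<le> q" using tower[OF assms(2)] assms(1) by blast
    then show False using x by simp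
  qed
  moreover have "\<not> q < p"
  proof
    assume "q < p"
    then have "nx q \<le> p" using tower[OF assms(1)] assms(2) by blast
    then show False using x by simp
  qed
  ultimately show ?thesis by simp
qed

lemma nonempty_iff: "p \<in> T \<Longrightarrow> interval_at f D x2 p \<noteq> {} \<longleftrightarrow> p < x2"
proof
  assume "p \<in> T" "interval_at f D x2 p \<noteq> {}"
  then obtain x where "p \<le> ereal x" "ereal x < nx p" unfolding interval_at_def by blast
  then show "p < x2" using nx_le[of p] by (meson le_less_trans less_le_trans)
next
  assume a: "p \<in> T" "p < x2"
  then obtain r where r: "p = ereal r" using T_real by blast
  have "p < nx p" using T_strict a by blast
  then have "r \<in> interval_at f D x2 p" unfolding interval_at_def using r by simp
  then show "interval_at f D x2 p \<noteq> {}" by blast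
qed

abbreviation "N \<equiv> {p \<in> T. interval_at f D x2 p \<noteq> {}}"
abbreviation "R \<equiv> Restr {(p, q). p \<le> q} N"

lemma R_iff: "(p, q) \<in> R \<longleftrightarrow> p \<in> N \<and> q \<in> N \<and> p \<le> q" by blast

lemma Field_R: "Field R = N"
proof
  show "Field R \<subseteq> N" by (rule Field_Restr_subset)
  show "N \<subseteq> Field R"
  proof
    fix p assume "p \<in> N"
    then have "(p, p) \<in> R" by simp
    then show "p \<in> Field R" by (rule FieldI1)
  qed
qed

lemma WO_R: "Well_order R"
proof (rule WO_intro)
  fix a assume "a \<in> Field R" then show "(a, a) \<in> R" unfolding Field_R by simp
next
  fix a b c assume "(a, b) \<in> R" "(b, c) \<in> R" then show "(a, c) \<in> R" unfolding R_iff by auto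
next
  fix a b assume "(a, b) \<in> R" "(b, a) \<in> R" then show "a = b" unfolding R_iff by auto
next
  fix a b assume "a \<in> Field R" "b \<in> Field R"
  then show "(a, b) \<in> R \<or> (b, a) \<in> R" unfolding Field_R R_iff by auto
next
  fix A assume A: "A \<subseteq> Field R" "A \<noteq> {}"
  then have "A \<subseteq> T" unfolding Field_R by auto
  then obtain m where m: "m \<in> A" "\<forall>s\<in>A. m \<le> s" using T_least A(2) by blast
  have "\<forall>s\<in>A. (m, s) \<in> R" using m A(1) unfolding Field_R R_iff by auto
  then show "\<exists>a\<in>A. \<forall>a'\<in>A. (a, a') \<in> R" using m(1) by blast
qed

end



context pset begin

lemma it_T: "q \<in> T \<Longrightarrow> (nx ^^ k) q \<in> T"
  by (induction k) (auto intro: pts.succ)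

lemma it_mono: "q \<in> T \<Longrightarrow> j \<le> k \<Longrightarrow> (nx ^^ j) q \<le> (nx ^^ k) q"
proof (induction k)
  case 0 then show ?case by simp
next
  case (Suc k)
  show ?case
  proof (cases "j = Suc k")
    case True then show ?thesis by simp
  next
    case False
    then have "(nx ^^ j) q \<le> (nx ^^ k) q" using Suc by simp
    also have "\<dots> \<le> (nx ^^ Suc k) q" using T_infl[OF it_T[OF Suc.prems(1)]] by simp
    finally show ?thesis .
  qed
qed

definition "isbase q \<longleftrightarrow> q \<in> T \<and> (\<forall>q'\<in>T. \<forall>j. (nx ^^ j) q' = q \<longrightarrow> q \<le> q')"
definition "base p = (LEAST q. q \<in> T \<and> (\<exists>k. (nx ^^ k) q = p))"

lemma base_props:
  assumes "p \<in> T"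
  shows "base p \<in> T" "\<exists>k. (nx ^^ k) (base p) = p" "isbase (base p)" "base p \<le> p"
proof -
  define B where "B = {q \<in> T. \<exists>k. (nx ^^ k) q = p}"
  have "p \<in> B" unfolding B_def using assms by (auto intro: exI[of _ 0])
  moreover have "B \<subseteq> T" unfolding B_def by (rule subsetI) simp
  ultimately obtain m where m: "m \<in> B" "\<forall>s\<in>B. m \<le> s" using T_least by blast
  have "base p = m" unfolding base_def
  proof (rule Least_equality)
    show "m \<in> T \<and> (\<exists>k. (nx ^^ k) m = p)" using m(1) unfolding B_def by simp
    fix y assume "y \<in> T \<and> (\<exists>k. (nx ^^ k) y = p)"
    then have "y \<in> B" unfolding B_def by simp
    then show "m \<le> y" using m(2) by blast
  qed
  then have bB: "base p \<in> B" using m(1) by simp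
  then show bT: "base p \<in> T" and bk: "\<exists>k. (nx ^^ k) (base p) = p" unfolding B_def by simp_all
  show "isbase (base p)" unfolding isbase_def
  proof (intro conjI ballI allI impI)
    show "base p \<in> T" by (rule bT)
    fix q' j assume q': "q' \<in> T" "(nx ^^ j) q' = base p"
    obtain k where k: "(nx ^^ k) (base p) = p" using bk by blast
    have "(nx ^^ (k + j)) q' = p" using q'(2) k by (simp add: funpow_add)
    then have "q' \<in> B" unfolding B_def using q'(1) by blast
    then show "base p \<le> q'" using m(2) \<open>base p = m\<close> by simp
  qed
  obtain k where k: "(nx ^^ k) (base p) = p" using bk by blast
  show "base p \<le> p" using it_mono[OF bT, of 0 k] k by simp
qed

lemma below_base:
  assumes b: "isbase q'" and q: "q \<in> T" "q < q'"
  shows "(nx ^^ n) q < q'"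
proof (induction n)
  case 0 then show ?case using q by simp
next
  case (Suc n)
  have q'T: "q' \<in> T" using b unfolding isbase_def by blast
  have "nx ((nx ^^ n) q) \<le> q'" using tower[OF q'T] it_T[OF q(1)] Suc by blast
  moreover have "(nx ^^ Suc n) q \<noteq> q'"
  proof
    assume "(nx ^^ Suc n) q = q'"
    then have "q' \<le> q" using b q(1) unfolding isbase_def by blast
    then show False using q(2) by simp
  qed
  ultimately show ?case by simp
qed

lemma base_order:
  assumes "p \<in> T" "p' \<in> T" "p < p'"
  shows "base p \<le> base p'"
proof (rule ccontr)
  assume "\<not> base p \<le> base p'"
  then have lt: "base p' < base p" by simp
  obtain k' where k': "(nx ^^ k') (base p') = p'" using base_props(2)[OF assms(2)] by blast
  have "(nx ^^ k') (base p') < base p"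
    using below_base[OF base_props(3)[OF assms(1)] base_props(1)[OF assms(2)] lt] by blast
  then have "p' < p" using k' base_props(4)[OF assms(1)] by simp
  then show False using assms(3) by simp
qed

lemma analytic:
  assumes q: "q \<in> T" and y: "y \<in> D" and below: "\<And>n. (nx ^^ n) q < ereal y"
  shows "\<exists>x\<in>D. q \<le> ereal x \<and> x < y \<and> f x < f y"
proof -
  have yx2: "ereal y < x2" using y unfolding Ddef by simp
  have pT: "(nx ^^ n) q \<in> T" for n using it_T[OF q] .
  have plt: "(nx ^^ n) q < x2" for n using below[of n] yx2 by (rule less_trans)
  define a where "a n = real_of_ereal ((nx ^^ n) q)" for n
  have pa: "(nx ^^ n) q = ereal (a n)" for n
  proof -
    obtain r where "(nx ^^ n) q = ereal r" using T_real[OF pT plt, of n] by blast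
    then show ?thesis unfolding a_def by simp
  qed
  have ay: "a n < y" for n using below[of n] pa[of n] by simp
  have ainc: "a n < a (Suc n)" for n
    using T_strict[OF pT plt, of n] pa[of n] pa[of "Suc n"] by simp
  have amono: "a n \<le> a (n + k)" for n k
  proof (induction k)
    case 0 then show ?case by simp
  next
    case (Suc k) then show ?case using ainc[of "n + k"] by simp
  qed
  define e where "e = f y"
  have e: "e > 0" unfolding e_def using fpos y by blast
  have "\<exists>n. a (n + 2) - a n < e"
  proof (rule ccontr)
    assume "\<not> (\<exists>n. a (n + 2) - a n < e)"
    then have step: "a (n + 2) \<ge> a n + e" for n
    proof -
      assume "\<not> (\<exists>n. a (n + 2) - a n < e)"
      then have "\<not> a (n + 2) - a n < e" by blast
      then show ?thesis by simp
    qed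
    have grow: "a (2 * m) \<ge> a 0 + m * e" for m
    proof (induction m)
      case 0 then show ?case by simp
    next
      case (Suc m)
      have "a (2 * Suc m) = a (2 * m + 2)" by simp
      then show ?case using step[of "2 * m"] Suc by (simp add: algebra_simps)
    qed
    obtain m :: nat where "m * e > y - a 0" using reals_Archimedean3[OF e] by blast
    then have "a (2 * m) > y" using grow[of m] by simp
    then show False using ay[of "2 * m"] by simp
  qed
  then obtain n where n: "a (n + 2) - a n < e" by blast
  have "nx ((nx ^^ n) q) = (nx ^^ Suc n) q" by simp
  also have "\<dots> < (nx ^^ (n + 2)) q"
    using pa[of "Suc n"] pa[of "n + 2"] ainc[of "Suc n"] by (simp del: funpow.simps)
  finally have "\<not> (nx ^^ (n + 2)) q \<le> nx ((nx ^^ n) q)" by simp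
  moreover have "(nx ^^ (n + 2)) q \<le> x2" using plt[of "n+2"] by simp
  ultimately obtain x where x: "x \<in> D" "ereal x < (nx ^^ (n + 2)) q" "\<not> ereal (x - f x) < (nx ^^ n) q"
    using nx_ge[of "(nx ^^ (n + 2)) q" "(nx ^^ n) q"] by blast
  have fx: "f x > 0" using fpos x(1) by blast
  have x1: "a n \<le> x - f x" using x(3) pa[of n] by simp
  have x2': "x < a (n + 2)" using x(2) pa[of "n+2"] by simp
  have "q \<le> ereal (a n)" using it_mono[OF q, of 0 n] pa[of n] by simp
  moreover have "a n \<le> x" using x1 fx by simp
  ultimately have "q \<le> ereal x" by (meson ereal_less_eq(3) order_trans)
  moreover have "x < y" using x2' ay[of "n+2"] by simp
  moreover have "f x < f y" using x1 x2' n unfolding e_def by simp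
  ultimately show ?thesis using x(1) by blast
qed

end



sublocale pset \<subseteq> tree f D
  by unfold_locales (rule childR_wf[OF od])

context pset begin

lemma bl_single: "y \<in> D \<Longrightarrow> bl [y]"
  unfolding bad_list_def by simp

definition "Ys q = {y \<in> D. q \<le> ereal y}"
definition "ymin q = (SOME y. y \<in> Ys q \<and> (\<forall>y'\<in>Ys q. \<not> hless [y'] [y]))"

lemma ymin_props:
  assumes "q \<in> T" "q < x2"
  shows "ymin q \<in> D" "q \<le> ereal (ymin q)" "\<And>y'. y' \<in> D \<Longrightarrow> q \<le> ereal y' \<Longrightarrow> hle [ymin q] [y']"
proof -
  obtain r where r: "q = ereal r" "x1 \<le> r" using T_real assms by blast
  have "r \<in> D" unfolding Ddef using r assms(2) by simp
  then have "r \<in> Ys q" unfolding Ys_def using r by simp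
  then have "[r] \<in> (\<lambda>y. [y]) ` Ys q" by blast
  then obtain z where z: "z \<in> (\<lambda>y. [y]) ` Ys q" "\<forall>w\<in>(\<lambda>y. [y]) ` Ys q. \<not> hless w z"
    using hless_minimal[of "[r]" "(\<lambda>y. [y]) ` Ys q"] by blast
  then obtain y where y: "y \<in> Ys q" "z = [y]" by blast
  have ex: "\<exists>y. y \<in> Ys q \<and> (\<forall>y'\<in>Ys q. \<not> hless [y'] [y])" using y z by blast
  have P: "ymin q \<in> Ys q \<and> (\<forall>y'\<in>Ys q. \<not> hless [y'] [ymin q])"
    unfolding ymin_def by (rule someI_ex[OF ex])
  then show "ymin q \<in> D" "q \<le> ereal (ymin q)" unfolding Ys_def by simp_all
  fix y' assume y': "y' \<in> D" "q \<le> ereal y'"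
  then have "y' \<in> Ys q" unfolding Ys_def by simp
  then have "\<not> hless [y'] [ymin q]" using P by blast
  moreover have "bl [y']" "bl [ymin q]" using y' P bl_single unfolding Ys_def by auto
  ultimately show "hle [ymin q] [y']" using hless_iff by blast
qed

definition "phi q = rank_class f D [ymin q]"

lemma phi_Field:
  assumes "q \<in> T" "q < x2"
  shows "phi q \<in> Field H"
proof -
  have yD: "ymin q \<in> D" using ymin_props[OF assms] by blast
  then have b: "bl [ymin q]" by (rule bl_single)
  then have "hle [ymin q] [ymin q]" by (rule hle_refl)
  then have "hless [ymin q] []" unfolding hless_def using b by auto
  then have "[ymin q] \<in> G" using b by simp
  then show ?thesis unfolding phi_def Field_H_iff by blast
qed

lemma phi_strict:
  assumes q: "isbase q" "q < x2" and q': "isbase q'" "q' < x2" and lt: "q < q'"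
  shows "(phi q, phi q') \<in> H \<and> phi q \<noteq> phi q'"
proof -
  have qT: "q \<in> T" and q'T: "q' \<in> T" using q q' unfolding isbase_def by blast+
  define y' where "y' = ymin q'"
  have y': "y' \<in> D" "q' \<le> ereal y'" using ymin_props[OF q'T q'(2)] unfolding y'_def by blast+
  have "\<And>n. (nx ^^ n) q < ereal y'" using below_base[OF q'(1) qT lt] y'(2) by (meson less_le_trans)
  then obtain x where x: "x \<in> D" "q \<le> ereal x" "x < y'" "f x < f y'" using analytic[OF qT y'(1)] by blast
  have blyx: "bl ([y'] @ [x])" using x y' bl_single[OF y'(1)] unfolding bl_snoc_iff by simp
  have blx: "bl ([] @ [x])" using bl_single[OF x(1)] by simp
  have "hle ([] @ [x]) ([y'] @ [x])" using shift_hle[of "[x]" "[]" "[y']"] blyx blx by simp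
  moreover have "hle [ymin q] [x]" using ymin_props(3)[OF qT q(2) x(1) x(2)] .
  ultimately have "hle [ymin q] ([y'] @ [x])" using hle_trans by simp
  then have hl: "hless [ymin q] [y']" unfolding hless_def using blyx by blast
  have G1: "[ymin q] \<in> G" and G2: "[y'] \<in> G"
  proof -
    have b1: "bl [ymin q]" using bl_single ymin_props(1)[OF qT q(2)] by blast
    have b2: "bl [y']" using bl_single y'(1) by blast
    have "hless [ymin q] []" unfolding hless_def using b1 hle_refl[OF b1] by auto
    then show "[ymin q] \<in> G" using b1 by simp
    have "hless [y'] []" unfolding hless_def using b2 hle_refl[OF b2] by auto
    then show "[y'] \<in> G" using b2 by simp
  qed
  have b: "bl [ymin q]" "bl [y']" using G1 G2 by simp_all
  have n: "\<not> hle [y'] [ymin q]" using hless_not_hle[OF hl] .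
  then have "hle [ymin q] [y']" using hle_total b by blast
  then have "(phi q, phi q') \<in> H" using H_iff[OF G1 G2] unfolding phi_def y'_def by simp
  moreover have "phi q \<noteq> phi q'" using cls_eq[OF b] n unfolding phi_def y'_def by blast
  ultimately show ?thesis by blast
qed

abbreviation "Om \<equiv> omega_times (ord_succ H)"

definition "gmap p = (Some (phi (base p)), SOME k. (nx ^^ k) (base p) = p)"

lemma main_ordLeq: "(R, Om) \<in> ordLeq"
proof (rule mono_ordLeq[OF WO_R WO_omega_times[OF WO_ord_succ[OF WO_H]]])
  fix p assume "p \<in> Field R"
  then have p: "p \<in> T" "p < x2" unfolding Field_R using nonempty_iff by auto
  have "base p < x2" using base_props(4)[OF p(1)] p(2) by (rule le_less_trans)
  then have "phi (base p) \<in> Field H" using phi_Field base_props(1)[OF p(1)] by blast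
  then show "gmap p \<in> Field Om" unfolding gmap_def Field_omega_times Field_ord_succ by blast
next
  fix p p' assume pp: "(p, p') \<in> R" "p \<noteq> p'"
  have p: "p \<in> T" "p < x2" and p': "p' \<in> T" "p' < x2" and lt: "p < p'"
    using pp nonempty_iff by auto
  have bp: "base p < x2" using base_props(4)[OF p(1)] p(2) by (rule le_less_trans)
  have bp': "base p' < x2" using base_props(4)[OF p'(1)] p'(2) by (rule le_less_trans)
  have F: "phi (base p) \<in> Field H" "phi (base p') \<in> Field H"
    using phi_Field base_props(1) p p' bp bp' by blast+
  have SF: "Some (phi (base p)) \<in> Field (ord_succ H)" "Some (phi (base p')) \<in> Field (ord_succ H)"
    using F unfolding Field_ord_succ by blast+
  define k where "k = (SOME k. (nx ^^ k) (base p) = p)"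
  define k' where "k' = (SOME k. (nx ^^ k) (base p') = p')"
  have k: "(nx ^^ k) (base p) = p" unfolding k_def using base_props(2)[OF p(1)] by (rule someI_ex)
  have k': "(nx ^^ k') (base p') = p'" unfolding k'_def using base_props(2)[OF p'(1)] by (rule someI_ex)
  have g: "gmap p = (Some (phi (base p)), k)" "gmap p' = (Some (phi (base p')), k')"
    unfolding gmap_def k_def k'_def by simp_all
  show "(gmap p, gmap p') \<in> Om \<and> gmap p \<noteq> gmap p'"
  proof (cases "base p = base p'")
    case True
    have "k < k'"
    proof (rule ccontr)
      assume "\<not> k < k'"
      then have "(nx ^^ k') (base p) \<le> (nx ^^ k) (base p)" using it_mono[OF base_props(1)[OF p(1)]] by simp
      then have "p' \<le> p" using k k' True by simp
      then show False using lt by simp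
    qed
    then show ?thesis unfolding g using SF True by (simp add: omega_times_iff)
  next
    case False
    then have "base p < base p'" using base_order[OF p(1) p'(1) lt] by simp
    then have "(phi (base p), phi (base p')) \<in> H \<and> phi (base p) \<noteq> phi (base p')"
      using phi_strict base_props(3) p p' bp bp' by blast
    then have "(Some (phi (base p)), Some (phi (base p'))) \<in> ord_succ H"
      "Some (phi (base p)) \<noteq> Some (phi (base p'))" unfolding ord_succ_iff by simp_all
    then show ?thesis unfolding g using SF by (simp add: omega_times_iff)
  qed
qed

lemma main:
  "(\<Union>p\<in>T. interval_at f D x2 p) = D
    \<and> (\<forall>p\<in>T. \<forall>q\<in>T. interval_at f D x2 p \<inter> interval_at f D x2 q \<noteq> {} \<longrightarrow> p = q)
    \<and> (R, Om) \<in> ordLeq"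
  using union disjoint main_ordLeq by blast

end


theorem lemma6:
  fixes x1 :: real and x2 :: ereal and f :: "real \<Rightarrow> real" and D :: "real set"
  assumes "ereal x1 < x2"
    and "D = {x. x1 \<le> x \<and> ereal x < x2}"
    and "ordinal_decreasing f D"
    and "\<forall>x\<in>D. f x > 0"
  shows "(\<Union>p\<in>pts f D x1 x2. interval_at f D x2 p) = D
    \<and> (\<forall>p\<in>pts f D x1 x2. \<forall>q\<in>pts f D x1 x2.
          interval_at f D x2 p \<inter> interval_at f D x2 q \<noteq> {} \<longrightarrow> p = q)
    \<and> (Restr {(p, q). p \<le> q} {p \<in> pts f D x1 x2. interval_at f D x2 p \<noteq> {}},
       omega_times (ord_succ (ord_height f D))) \<in> ordLeq"
proof -
  interpret pset x1 x2 f D using assms by unfold_locales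
  show ?thesis by (rule main)
qed

end
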